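(* In the setting of the context, suppose that $R=S$ and that $A$ is not abelian. If $v\in C_V(A)$ satisfies $[v\mu,a]-vh_a=0$ for all $a\in A$, then $v=0$.
   Context: Conventions: $G$ acts on $V$ on the right, $[v,g]=-v+vg$; $[X,Y]$ is the subgroup generated by commutators, $[X,Y,Z]=[[X,Y],Z]$; $A^\#=A\setminus\{1\}$. Setting: $G=\langle A,B\rangle$ is an abstract rank one group with unipotent subgroups $A,B$ (distinct nilpotent; for each $a\in A^\#$ some $b(a)\in B^\#$ with $B^a=A^{b(a)}$, and vice versa). $\mu_a=b(a^{-1})ab(a)^{-1}$, $H=\langle\mu_a\mu_c:a,c\in A^\#\rangle$. $V$ is a $\mathbb{Z}G$-module with $[V,A,A,A]=0$, $[V,G,G,G]\neq0$, $[V,G]=V$, $C_V(G)=0$. $A_0=C_A([V,A])\cap C_A(V/C_V(A))\neq1$. Fix $e\in A_0^\#$ (with $e=a^2$ for some $a\in A$ if $V$ has exponent 2 and $A$ is non-abelian), $\mu=\mu_{e^{-1}}$, $h_a=\mu\mu_a$ for $a\in A^\#$, $h_1=0$; $\rho(h)$ = restriction of $h\in H$ to $C_V(A)$, $\rho(h_1)=0$. $R$, $S$ are the subrings of $\mathrm{End}(C_V(A))$ generated by $J=\{\rho(h_a):a\in A_0\}$, resp. by $\rho(H)$. *)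

theory Defs
  imports "HOL-Algebra.Algebra"
begin

definition conjset :: "('g, 'b) monoid_scheme \<Rightarrow> 'g set \<Rightarrow> 'g \<Rightarrow> 'g set" where
  "conjset G S g = {monoid.mult G (monoid.mult G (m_inv G g) x) g | x. x \<in> S}"

definition gcomm :: "('g, 'b) monoid_scheme \<Rightarrow> 'g set \<Rightarrow> 'g set \<Rightarrow> 'g set" where
  "gcomm G S T = generate G
     {monoid.mult G (monoid.mult G (monoid.mult G (m_inv G x) (m_inv G y)) x) y | x y. x \<in> S \<and> y \<in> T}"

fun lower_central :: "('g, 'b) monoid_scheme \<Rightarrow> 'g set \<Rightarrow> nat \<Rightarrow> 'g set" where
  "lower_central G S 0 = S"
| "lower_central G S (Suc n) = gcomm G (lower_central G S n) S"

definition nilpotent_subgroup :: "('g, 'b) monoid_scheme \<Rightarrow> 'g set \<Rightarrow> bool" where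
  "nilpotent_subgroup G S \<longleftrightarrow> subgroup S G \<and> (\<exists>n. lower_central G S n = {one G})"

definition abelian_set :: "('g, 'b) monoid_scheme \<Rightarrow> 'g set \<Rightarrow> bool" where
  "abelian_set G S \<longleftrightarrow> (\<forall>x\<in>S. \<forall>y\<in>S. monoid.mult G x y = monoid.mult G y x)"

text \<open>Abstract rank one group G = <A,B> with unipotent subgroups A, B;
  bf is the function a \<mapsto> b(a) (B^a = A^{b(a)}).\<close>
definition rank_one_group ::
  "('g, 'b) monoid_scheme \<Rightarrow> 'g set \<Rightarrow> 'g set \<Rightarrow> ('g \<Rightarrow> 'g) \<Rightarrow> bool" where
  "rank_one_group G A B bf \<longleftrightarrow>
     group G \<and> nilpotent_subgroup G A \<and> nilpotent_subgroup G B \<and> A \<noteq> B \<and>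
     generate G (A \<union> B) = carrier G \<and>
     (\<forall>a \<in> A - {one G}. bf a \<in> B - {one G} \<and> conjset G B a = conjset G A (bf a)) \<and>
     (\<forall>b \<in> B - {one G}. \<exists>a \<in> A - {one G}. conjset G A b = conjset G B a)"

definition mu_elt :: "('g, 'b) monoid_scheme \<Rightarrow> ('g \<Rightarrow> 'g) \<Rightarrow> 'g \<Rightarrow> 'g" where
  "mu_elt G bf a = monoid.mult G (monoid.mult G (bf (m_inv G a)) a) (m_inv G (bf a))"

definition Hgrp :: "('g, 'b) monoid_scheme \<Rightarrow> 'g set \<Rightarrow> ('g \<Rightarrow> 'g) \<Rightarrow> 'g set" where
  "Hgrp G A bf = generate G {monoid.mult G (mu_elt G bf a) (mu_elt G bf c) | a c.
       a \<in> A - {one G} \<and> c \<in> A - {one G}}"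

section \<open>Modules: V is the whole type 'v, G acts on the right via act\<close>

definition right_ZG_module ::
  "('g, 'b) monoid_scheme \<Rightarrow> ('v::ab_group_add \<Rightarrow> 'g \<Rightarrow> 'v) \<Rightarrow> bool" where
  "right_ZG_module G act \<longleftrightarrow>
     (\<forall>v. act v (one G) = v) \<and>
     (\<forall>v. \<forall>g\<in>carrier G. \<forall>h\<in>carrier G. act (act v g) h = act v (monoid.mult G g h)) \<and>
     (\<forall>v w. \<forall>g\<in>carrier G. act (v + w) g = act v g + act w g)"

inductive_set addgen :: "'v::ab_group_add set \<Rightarrow> 'v set" for S where
  zero: "0 \<in> addgen S"
| base: "x \<in> S \<Longrightarrow> x \<in> addgen S"
| diff: "x \<in> addgen S \<Longrightarrow> y \<in> addgen S \<Longrightarrow> x - y \<in> addgen S"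

definition mcomm :: "('v::ab_group_add \<Rightarrow> 'g \<Rightarrow> 'v) \<Rightarrow> 'v \<Rightarrow> 'g \<Rightarrow> 'v" where
  "mcomm act v g = - v + act v g"

definition mcommset :: "('v::ab_group_add \<Rightarrow> 'g \<Rightarrow> 'v) \<Rightarrow> 'v set \<Rightarrow> 'g set \<Rightarrow> 'v set" where
  "mcommset act W S = addgen {mcomm act w x | w x. w \<in> W \<and> x \<in> S}"

definition centralizer_V :: "('v \<Rightarrow> 'g \<Rightarrow> 'v) \<Rightarrow> 'g set \<Rightarrow> 'v set" where
  "centralizer_V act S = {v. \<forall>g\<in>S. act v g = v}"

text \<open>A_0 = C_A([V,A]) \<inter> C_A(V/C_V(A))\<close>
definition A0set :: "('v::ab_group_add \<Rightarrow> 'g \<Rightarrow> 'v) \<Rightarrow> 'g set \<Rightarrow> 'g set" where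
  "A0set act A = {a \<in> A. (\<forall>w \<in> mcommset act UNIV A. act w a = w) \<and>
                          (\<forall>v. mcomm act v a \<in> centralizer_V act A)}"

text \<open>Endomorphisms of C_V(A) are represented by functions 'v \<Rightarrow> 'v that vanish outside C_V(A).
  rho h = restriction of h to C_V(A).\<close>
definition rho :: "('v::ab_group_add \<Rightarrow> 'g \<Rightarrow> 'v) \<Rightarrow> 'g set \<Rightarrow> 'g \<Rightarrow> ('v \<Rightarrow> 'v)" where
  "rho act A h = (\<lambda>v. if v \<in> centralizer_V act A then act v h else 0)"

inductive_set subring_gen :: "'v::ab_group_add set \<Rightarrow> ('v \<Rightarrow> 'v) set \<Rightarrow> ('v \<Rightarrow> 'v) set"
  for C J where
  one: "(\<lambda>v. if v \<in> C then v else 0) \<in> subring_gen C J"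
| base: "f \<in> J \<Longrightarrow> f \<in> subring_gen C J"
| diff: "f \<in> subring_gen C J \<Longrightarrow> g \<in> subring_gen C J \<Longrightarrow> (\<lambda>v. f v - g v) \<in> subring_gen C J"
| comp: "f \<in> subring_gen C J \<Longrightarrow> g \<in> subring_gen C J \<Longrightarrow> (\<lambda>v. g (f v)) \<in> subring_gen C J"

text \<open>rho(h_a) with h_a = mu mu_a, mu = mu_{e^-1}, and rho(h_1) = 0\<close>
definition rho_h :: "('g, 'b) monoid_scheme \<Rightarrow> ('v::ab_group_add \<Rightarrow> 'g \<Rightarrow> 'v) \<Rightarrow> 'g set \<Rightarrow>
    ('g \<Rightarrow> 'g) \<Rightarrow> 'g \<Rightarrow> 'g \<Rightarrow> ('v \<Rightarrow> 'v)" where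
  "rho_h G act A bf e a = (if a = one G then (\<lambda>v. 0)
      else rho act A (monoid.mult G (mu_elt G bf (m_inv G e)) (mu_elt G bf a)))"

definition Rring where
  "Rring G act A bf e = subring_gen (centralizer_V act A) {rho_h G act A bf e a | a. a \<in> A0set act A}"

definition Sring where
  "Sring G act A bf = subring_gen (centralizer_V act A) {rho act A h | h. h \<in> Hgrp G A bf}"

end

theory Submission
  imports Defs
begin

lemma conjset_mult:
  fixes G (structure)
  assumes "group G" "S \<subseteq> carrier G" "g \<in> carrier G" "h \<in> carrier G"
  shows "conjset G S (g \<otimes>\<^bsub>G\<^esub> h) = conjset G (conjset G S g) h"
proof -
  interpret group G by fact
  have eq: "inv (g \<otimes> h) \<otimes> x \<otimes> (g \<otimes> h) = inv h \<otimes> (inv g \<otimes> x \<otimes> g) \<otimes> h"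
    if "x \<in> carrier G" for x
    using that assms by (simp add: inv_mult_group m_assoc)
  show ?thesis
    unfolding conjset_def
  proof (intro equalityI subsetI)
    fix y assume "y \<in> {inv (g \<otimes> h) \<otimes> x \<otimes> (g \<otimes> h) |x. x \<in> S}"
    then obtain x where x: "x \<in> S" "y = inv (g \<otimes> h) \<otimes> x \<otimes> (g \<otimes> h)" by blast
    then have "y = inv h \<otimes> (inv g \<otimes> x \<otimes> g) \<otimes> h" using eq assms by blast
    then show "y \<in> {inv h \<otimes> x \<otimes> h |x. x \<in> {inv g \<otimes> x \<otimes> g |x. x \<in> S}}" using x by blast
  next
    fix y assume "y \<in> {inv h \<otimes> x \<otimes> h |x. x \<in> {inv g \<otimes> x \<otimes> g |x. x \<in> S}}"
    then obtain x where x: "x \<in> S" "y = inv h \<otimes> (inv g \<otimes> x \<otimes> g) \<otimes> h" by blast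
    then have "y = inv (g \<otimes> h) \<otimes> x \<otimes> (g \<otimes> h)" using eq assms by auto
    then show "y \<in> {inv (g \<otimes> h) \<otimes> x \<otimes> (g \<otimes> h) |x. x \<in> S}" using x by blast
  qed
qed

lemma conjset_sub:
  fixes G (structure)
  assumes "group G" "subgroup S G" "g \<in> S"
  shows "conjset G S g = S"
proof -
  interpret group G by fact
  have gc: "g \<in> carrier G" using assms subgroup.subset by blast
  have Sc: "S \<subseteq> carrier G" using assms subgroup.subset by blast
  show ?thesis unfolding conjset_def
  proof (intro equalityI subsetI)
    fix y assume "y \<in> {inv g \<otimes> x \<otimes> g |x. x \<in> S}"
    then obtain x where x: "x \<in> S" "y = inv g \<otimes> x \<otimes> g" by blast
    then show "y \<in> S" using assms by (simp add: subgroup.m_closed subgroup.m_inv_closed)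
  next
    fix y assume y: "y \<in> S"
    have yc: "y \<in> carrier G" using y Sc by blast
    have "g \<otimes> y \<otimes> inv g \<in> S" using assms y by (simp add: subgroup.m_closed subgroup.m_inv_closed)
    moreover have "y = inv g \<otimes> (g \<otimes> y \<otimes> inv g) \<otimes> g"
      using gc yc by (metis inv_closed l_inv l_one m_assoc m_closed r_one)
    ultimately show "y \<in> {inv g \<otimes> x \<otimes> g |x. x \<in> S}" by blast
  qed
qed

lemma conjset_one:
  fixes G (structure)
  assumes "group G" "S \<subseteq> carrier G"
  shows "conjset G S \<one>\<^bsub>G\<^esub> = S"
proof -
  interpret group G by fact
  show ?thesis unfolding conjset_def using assms by force
qed

lemma mu_conj:
  fixes G (structure)
  assumes grp: "group G" and sA: "subgroup A G" and sB: "subgroup B G"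
    and bfc: "\<forall>a \<in> A - {\<one>}. bf a \<in> B - {\<one>} \<and> conjset G B a = conjset G A (bf a)"
    and a: "a \<in> A" "a \<noteq> \<one>"
  shows "conjset G A (mu_elt G bf a) = B \<and> conjset G B (mu_elt G bf a) = A
         \<and> mu_elt G bf a \<in> carrier G"
proof -
  interpret group G by fact
  have Ac: "A \<subseteq> carrier G" using sA subgroup.subset by blast
  have Bc: "B \<subseteq> carrier G" using sB subgroup.subset by blast
  have ac: "a \<in> carrier G" using a Ac by blast
  have ia: "inv a \<in> A" "inv a \<noteq> \<one>" using a sA ac
    by (auto simp: subgroup.m_inv_closed)
  have b1: "bf (inv a) \<in> B" "conjset G B (inv a) = conjset G A (bf (inv a))"
    using bfc ia by auto
  have b2: "bf a \<in> B" "conjset G B a = conjset G A (bf a)" using bfc a by auto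
  have b1c: "bf (inv a) \<in> carrier G" and b2c: "bf a \<in> carrier G" using b1 b2 Bc by auto
  have ib2: "inv (bf a) \<in> B" using b2 sB by (simp add: subgroup.m_inv_closed)
  have muc: "mu_elt G bf a \<in> carrier G" unfolding mu_elt_def using b1c b2c ac by simp
  have cB: "conjset G B (inv a) \<subseteq> carrier G" unfolding conjset_def using Bc ac by auto
  have cA: "conjset G A (bf a) \<subseteq> carrier G" unfolding conjset_def using Ac b2c by auto
  have cA1: "conjset G A (bf (inv a)) \<subseteq> carrier G" unfolding conjset_def using Ac b1c by auto
  have cB1: "conjset G B (bf (inv a)) \<subseteq> carrier G" unfolding conjset_def using Bc b1c by auto
  have cB2: "conjset G B a \<subseteq> carrier G" unfolding conjset_def using Bc ac by auto
  have "conjset G A (mu_elt G bf a)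
      = conjset G (conjset G (conjset G A (bf (inv a))) a) (inv (bf a))"
    unfolding mu_elt_def using Ac b1c b2c ac cA1
    by (simp add: conjset_mult[OF grp] conjset_def[symmetric])
  also have "\<dots> = conjset G (conjset G B (inv a \<otimes> a)) (inv (bf a))"
    using b1(2)[symmetric] conjset_mult[OF grp Bc, of "inv a" a] ac by simp
  also have "\<dots> = B" using ac conjset_one[OF grp Bc] conjset_sub[OF grp sB ib2] by simp
  finally have 1: "conjset G A (mu_elt G bf a) = B" .
  have "conjset G B (mu_elt G bf a)
      = conjset G (conjset G (conjset G B (bf (inv a))) a) (inv (bf a))"
    unfolding mu_elt_def using Bc b1c b2c ac cB1
    by (simp add: conjset_mult[OF grp] conjset_def[symmetric])
  also have "\<dots> = conjset G (conjset G A (bf a)) (inv (bf a))"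
    using conjset_sub[OF grp sB b1(1)] b2(2) by simp
  also have "\<dots> = A"
    using conjset_mult[OF grp Ac b2c, of "inv (bf a)"] b2c conjset_one[OF grp Ac] by simp
  finally show ?thesis using 1 muc by simp
qed

lemma norm_cent:
  fixes G (structure)
  assumes grp: "group G" and module: "right_ZG_module G act"
    and Ac: "A \<subseteq> carrier G" and hc: "h \<in> carrier G" and n: "conjset G A h = A"
    and v: "v \<in> centralizer_V act A"
  shows "act v h \<in> centralizer_V act A"
proof -
  interpret group G by fact
  have ma: "\<And>v g h. g \<in> carrier G \<Longrightarrow> h \<in> carrier G \<Longrightarrow> act (act v g) h = act v (g \<otimes> h)"
    using module unfolding right_ZG_module_def by blast
  show ?thesis unfolding centralizer_V_def
  proof (intro CollectI ballI)
    fix x assume x: "x \<in> A"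
    then have "x \<in> conjset G A h" using n by simp
    then obtain y where y: "y \<in> A" "x = inv h \<otimes> y \<otimes> h" unfolding conjset_def by blast
    have yc: "y \<in> carrier G" using y Ac by blast
    have "h \<otimes> x = y \<otimes> h" using y hc yc
      by (metis inv_closed m_assoc m_closed r_inv l_one)
    then have "act (act v h) x = act (act v y) h" using ma x Ac hc yc by auto
    also have "act v y = v" using v y unfolding centralizer_V_def by blast
    finally show "act (act v h) x = act v h" .
  qed
qed

theorem proposition5p4:
  fixes G :: "('g, 'b) monoid_scheme"
    and A B :: "'g set"
    and bf :: "'g \<Rightarrow> 'g"
    and act :: "'v::ab_group_add \<Rightarrow> 'g \<Rightarrow> 'v"
    and e :: 'g and v :: 'v
  assumes rank1: "rank_one_group G A B bf"
    and module: "right_ZG_module G act"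
    and AAA: "mcommset act (mcommset act (mcommset act UNIV A) A) A = {0}"
    and GGG: "mcommset act (mcommset act (mcommset act UNIV (carrier G)) (carrier G)) (carrier G) \<noteq> {0}"
    and VG: "mcommset act UNIV (carrier G) = UNIV"
    and CVG: "centralizer_V act (carrier G) = {0}"
    and A0: "A0set act A \<noteq> {one G}"
    and e_in: "e \<in> A0set act A" and e_ne: "e \<noteq> one G"
    and e_sq: "(\<forall>w::'v. w + w = 0) \<and> \<not> abelian_set G A \<longrightarrow> (\<exists>a\<in>A. e = monoid.mult G a a)"
    and RS: "Rring G act A bf e = Sring G act A bf"
    and nonab: "\<not> abelian_set G A"
    and v_in: "v \<in> centralizer_V act A"
    and hyp: "\<forall>a\<in>A. mcomm act (act v (mu_elt G bf (m_inv G e))) a - rho_h G act A bf e a v = 0"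
  shows "v = 0"
proof -
  interpret group G using rank1 unfolding rank_one_group_def by blast
  have grp: "group G" using rank1 unfolding rank_one_group_def by blast
  have sA: "subgroup A G" and sB: "subgroup B G"
    using rank1 unfolding rank_one_group_def nilpotent_subgroup_def by blast+
  have bfc: "\<forall>a \<in> A - {\<one>\<^bsub>G\<^esub>}. bf a \<in> B - {\<one>\<^bsub>G\<^esub>} \<and> conjset G B a = conjset G A (bf a)"
    using rank1 unfolding rank_one_group_def by blast
  have Ac: "A \<subseteq> carrier G" using sA subgroup.subset by blast
  have ma: "\<And>v g h. g \<in> carrier G \<Longrightarrow> h \<in> carrier G \<Longrightarrow> act (act v g) h = act v (g \<otimes>\<^bsub>G\<^esub> h)"
    using module unfolding right_ZG_module_def by blast
  have m1: "\<And>v. act v \<one>\<^bsub>G\<^esub> = v" using module unfolding right_ZG_module_def by blast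
  have madd: "\<And>v w g. g \<in> carrier G \<Longrightarrow> act (v + w) g = act v g + act w g"
    using module unfolding right_ZG_module_def by blast
  have m0: "\<And>g. g \<in> carrier G \<Longrightarrow> act 0 g = 0"
    using madd[of _ 0 0] by simp
  have eA: "e \<in> A" using e_in unfolding A0set_def by blast
  have ieA: "inv\<^bsub>G\<^esub> e \<in> A" "inv\<^bsub>G\<^esub> e \<noteq> \<one>\<^bsub>G\<^esub>"
    using eA e_ne sA Ac by (auto simp: subgroup.m_inv_closed)
  define mu where "mu = mu_elt G bf (inv\<^bsub>G\<^esub> e)"
  have mu: "conjset G A mu = B" "mu \<in> carrier G"
    using mu_conj[OF grp sA sB bfc ieA] unfolding mu_def by auto
  define w where "w = act v mu"
  define f where "f = (\<lambda>a. mcomm act w a)"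
  have F1: "\<forall>a\<in>A. f a = rho_h G act A bf e a v"
    using hyp unfolding f_def w_def mu_def by simp
  have F2: "\<forall>a\<in>A. f a \<in> centralizer_V act A"
  proof
    fix a assume a: "a \<in> A"
    show "f a \<in> centralizer_V act A"
    proof (cases "a = \<one>\<^bsub>G\<^esub>")
      case True
      then show ?thesis using F1 a m0 Ac unfolding rho_h_def centralizer_V_def by auto
    next
      case False
      have ma': "conjset G B (mu_elt G bf a) = A" "mu_elt G bf a \<in> carrier G"
        using mu_conj[OF grp sA sB bfc a False] by auto
      have "conjset G A (mu \<otimes>\<^bsub>G\<^esub> mu_elt G bf a) = A"
        using conjset_mult[OF grp Ac mu(2) ma'(2)] mu(1) ma'(1) by simp
      then have "act v (mu \<otimes>\<^bsub>G\<^esub> mu_elt G bf a) \<in> centralizer_V act A"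
        using norm_cent[OF grp module Ac _ _ v_in] mu(2) ma'(2) by simp
      then show ?thesis using F1 a False v_in unfolding rho_h_def rho_def mu_def by simp
    qed
  qed
  have F3: "f (a \<otimes>\<^bsub>G\<^esub> b) = f a + f b" if a: "a \<in> A" and b: "b \<in> A" for a b
  proof -
    have ac: "a \<in> carrier G" and bc: "b \<in> carrier G" using a b Ac by auto
    have wa: "act w a = w + f a" unfolding f_def mcomm_def by simp
    have fab: "act (f a) b = f a" using F2 a b unfolding centralizer_V_def by blast
    have "act w (a \<otimes>\<^bsub>G\<^esub> b) = act (w + f a) b" using ma ac bc wa by metis
    also have "\<dots> = act w b + f a" using madd bc fab by simp
    finally show ?thesis unfolding f_def mcomm_def by (simp add: algebra_simps)
  qed
  have F4: "f \<one>\<^bsub>G\<^esub> = 0" unfolding f_def mcomm_def using m1 by simp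
  have F5: "f (inv\<^bsub>G\<^esub> a) = - f a" if a: "a \<in> A" for a
  proof -
    have ac: "a \<in> carrier G" using a Ac by auto
    have "f (inv\<^bsub>G\<^esub> a \<otimes>\<^bsub>G\<^esub> a) = f (inv\<^bsub>G\<^esub> a) + f a"
      using F3 a sA by (simp add: subgroup.m_inv_closed)
    then show ?thesis using F4 ac by (simp add: add_eq_0_iff)
  qed
  obtain x y where xy: "x \<in> A" "y \<in> A" "x \<otimes>\<^bsub>G\<^esub> y \<noteq> y \<otimes>\<^bsub>G\<^esub> x"
    using nonab unfolding abelian_set_def by blast
  have xc: "x \<in> carrier G" and yc: "y \<in> carrier G" using xy Ac by auto
  define c where "c = inv\<^bsub>G\<^esub> x \<otimes>\<^bsub>G\<^esub> inv\<^bsub>G\<^esub> y \<otimes>\<^bsub>G\<^esub> x \<otimes>\<^bsub>G\<^esub> y"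
  have ixA: "inv\<^bsub>G\<^esub> x \<in> A" and iyA: "inv\<^bsub>G\<^esub> y \<in> A"
    using xy sA by (auto simp: subgroup.m_inv_closed)
  have cA: "c \<in> A" unfolding c_def using xy ixA iyA sA by (simp add: subgroup.m_closed)
  have cc: "c \<in> carrier G" using cA Ac by auto
  have c1: "c \<noteq> \<one>\<^bsub>G\<^esub>"
  proof
    assume "c = \<one>\<^bsub>G\<^esub>"
    then have "y \<otimes>\<^bsub>G\<^esub> x \<otimes>\<^bsub>G\<^esub> c = y \<otimes>\<^bsub>G\<^esub> x" using xc yc by simp
    moreover have "y \<otimes>\<^bsub>G\<^esub> x \<otimes>\<^bsub>G\<^esub> c = x \<otimes>\<^bsub>G\<^esub> y"
      unfolding c_def using xc yc by (simp add: m_assoc[symmetric])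
        (simp add: m_assoc)
    ultimately show False using xy(3) by simp
  qed
  have "f c = f (inv\<^bsub>G\<^esub> x) + f (inv\<^bsub>G\<^esub> y) + f x + f y"
    unfolding c_def using F3 xy ixA iyA sA by (simp add: subgroup.m_closed)
  then have fc: "f c = 0" using F5 xy by simp
  have mc: "mu_elt G bf c \<in> carrier G" using mu_conj[OF grp sA sB bfc cA c1] by auto
  define g where "g = mu \<otimes>\<^bsub>G\<^esub> mu_elt G bf c"
  have gc: "g \<in> carrier G" unfolding g_def using mu mc by simp
  have "act v g = 0" using fc F1 cA c1 v_in unfolding rho_h_def rho_def g_def mu_def by simp
  then have "act (act v g) (inv\<^bsub>G\<^esub> g) = 0" using m0 gc by simp
  moreover have "act (act v g) (inv\<^bsub>G\<^esub> g) = v" using ma gc m1 by simp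
  ultimately show "v = 0" by simp
qed

end
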